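(* Let $f$ be a periodic traveling wave of speed $c$ with $c\neq0$ and $c^2\neq 1$. If $\lambda\in\mathbb{R}\setminus\{0\}$ belongs to $\sigma(\mathrm{P})$, then one of the Floquet multipliers $\rho$ of (P) at $\lambda$ satisfies $\rho^2=1$.
   Context: A traveling wave of speed $c$ is a real solution $f$ of $(c^2-1)f''+\sin f=0$, with energy $E$ given by $\tfrac12(c^2-1)(f')^2+1-\cos f=E$; periodic traveling waves are librational ($0<E<2$) or rotational ($E<0$ if $c^2<1$, $E>2$ if $c^2>1$), with fundamental period $T$ (smallest $T>0$ with $f(z+T)=f(z)\pmod{2\pi}$). Let $\gamma=1/(c^2-1)$. Equation (P): $p''-2c\gamma\lambda p'+\gamma(\lambda^2+\cos f(z))p=0$, written as a first-order system for $(p,p')$; its monodromy matrix is $F(T;\lambda)$ where $F$ is the fundamental matrix with $F(0;\lambda)=I$, and its Floquet multipliers are the eigenvalues of the monodromy matrix. $\sigma(\mathrm{P})$ is the set of $\lambda\in\mathbb{C}$ for which (P) has a nontrivial solution bounded on $\mathbb{R}$. *)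

theory Defs
  imports "HOL-Analysis.Analysis"
begin

definition tw_gamma :: "real \<Rightarrow> real" where
  "tw_gamma c = 1 / (c\<^sup>2 - 1)"

definition traveling_wave :: "real \<Rightarrow> (real \<Rightarrow> real) \<Rightarrow> bool" where
  "traveling_wave c f \<longleftrightarrow>
     (\<exists>f' f''. \<forall>z. (f has_real_derivative f' z) (at z) \<and>
                    (f' has_real_derivative f'' z) (at z) \<and>
                    (c\<^sup>2 - 1) * f'' z + sin (f z) = 0)"

definition tw_energy :: "real \<Rightarrow> (real \<Rightarrow> real) \<Rightarrow> real \<Rightarrow> bool" where
  "tw_energy c f E \<longleftrightarrow>
     (\<forall>z. (1/2) * (c\<^sup>2 - 1) * (deriv f z)\<^sup>2 + 1 - cos (f z) = E)"

definition period_mod_2pi :: "(real \<Rightarrow> real) \<Rightarrow> real \<Rightarrow> bool" where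
  "period_mod_2pi f T \<longleftrightarrow> (\<forall>z. \<exists>k::int. f (z + T) = f z + 2 * pi * of_int k)"

definition fundamental_period :: "(real \<Rightarrow> real) \<Rightarrow> real \<Rightarrow> bool" where
  "fundamental_period f T \<longleftrightarrow>
     T > 0 \<and> period_mod_2pi f T \<and> (\<forall>S. 0 < S \<and> S < T \<longrightarrow> \<not> period_mod_2pi f S)"

text \<open>Periodic traveling wave: librational or rotational traveling wave
  (with a fundamental period T).\<close>
definition periodic_traveling_wave :: "real \<Rightarrow> (real \<Rightarrow> real) \<Rightarrow> real \<Rightarrow> bool" where
  "periodic_traveling_wave c f T \<longleftrightarrow>
     traveling_wave c f \<and> fundamental_period f T \<and>
     (\<exists>E. tw_energy c f E \<and>
          ((0 < E \<and> E < 2) \<or> (c\<^sup>2 < 1 \<and> E < 0) \<or> (c\<^sup>2 > 1 \<and> E > 2)))"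

text \<open>Coefficient matrix of (P) written as a first order system for Y = (p, p'):
  component 1 is p, component 2 is p'.\<close>
definition P_matrix :: "real \<Rightarrow> (real \<Rightarrow> real) \<Rightarrow> complex \<Rightarrow> real \<Rightarrow> complex^2^2" where
  "P_matrix c f lam z =
     (\<chi> i j. if i = 1 then (if j = 1 then 0 else 1)
             else (if j = 1 then - of_real (tw_gamma c) * (lam\<^sup>2 + of_real (cos (f z)))
                   else 2 * of_real c * of_real (tw_gamma c) * lam))"

definition fundamental_matrix ::
    "real \<Rightarrow> (real \<Rightarrow> real) \<Rightarrow> complex \<Rightarrow> (real \<Rightarrow> complex^2^2) \<Rightarrow> bool" where
  "fundamental_matrix c f lam F \<longleftrightarrow>
     F 0 = mat 1 \<and>
     (\<forall>z. (F has_vector_derivative (P_matrix c f lam z ** F z)) (at z))"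

definition monodromy :: "real \<Rightarrow> (real \<Rightarrow> real) \<Rightarrow> real \<Rightarrow> complex \<Rightarrow> complex^2^2" where
  "monodromy c f T lam = (THE M. \<exists>F. fundamental_matrix c f lam F \<and> M = F T)"

definition floquet_multiplier :: "real \<Rightarrow> (real \<Rightarrow> real) \<Rightarrow> real \<Rightarrow> complex \<Rightarrow> complex \<Rightarrow> bool" where
  "floquet_multiplier c f T lam rho \<longleftrightarrow>
     (\<exists>v. v \<noteq> 0 \<and> monodromy c f T lam *v v = rho *s v)"

definition solves_P :: "real \<Rightarrow> (real \<Rightarrow> real) \<Rightarrow> complex \<Rightarrow> (real \<Rightarrow> complex) \<Rightarrow> bool" where
  "solves_P c f lam p \<longleftrightarrow>
     (\<exists>p' p''. \<forall>z. (p has_vector_derivative p' z) (at z) \<and>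
                    (p' has_vector_derivative p'' z) (at z) \<and>
                    p'' z - 2 * of_real c * of_real (tw_gamma c) * lam * p' z
                      + of_real (tw_gamma c) * (lam\<^sup>2 + of_real (cos (f z))) * p z = 0)"

definition sigma_P :: "real \<Rightarrow> (real \<Rightarrow> real) \<Rightarrow> complex set" where
  "sigma_P c f = {lam. \<exists>p. solves_P c f lam p \<and> (\<exists>z. p z \<noteq> 0) \<and> bounded (range p)}"

end

theory Submission
  imports Defs
begin


definition prim :: "(real \<Rightarrow> real) \<Rightarrow> real \<Rightarrow> real" where
  "prim g = (SOME G. G 0 = 0 \<and> (\<forall>x. (G has_real_derivative g x) (at x)))"

lemma prim:
  assumes "\<And>x. isCont g x"
  shows "prim g 0 = 0" "(prim g has_real_derivative g x) (at x)"
proof -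
  obtain F where F: "\<And>x::real. (F has_vector_derivative g x) (at x)"
    using einterval_antiderivative[of "-\<infinity>" "\<infinity>" g] assms by auto
  have "\<exists>G. G 0 = 0 \<and> (\<forall>x. (G has_real_derivative g x) (at x))"
    by (rule exI[of _ "\<lambda>x. F x - F 0"])
       (auto simp: has_real_derivative_iff_has_vector_derivative intro!: derivative_eq_intros F)
  from someI_ex[OF this] show "prim g 0 = 0" "(prim g has_real_derivative g x) (at x)"
    unfolding prim_def by auto
qed

lemma deriv_bound_pos:
  fixes g g' :: "real \<Rightarrow> real"
  assumes d: "\<And>x. (g has_real_derivative g' x) (at x)" and g0: "g 0 = 0"
    and b: "\<And>s. 0 \<le> s \<Longrightarrow> s \<le> z \<Longrightarrow> \<bar>g' s\<bar> \<le> M * s ^ n" and z: "0 \<le> z"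
  shows "\<bar>g z\<bar> \<le> M * z ^ Suc n / Suc n"
proof -
  define H where "H s = M * s ^ Suc n / Suc n" for s
  have dH: "(H has_real_derivative M * s ^ n) (at s)" for s
  proof -
    have "((\<lambda>s. s ^ Suc n) has_real_derivative real (Suc n) * s ^ n) (at s)"
      using DERIV_pow[of "Suc n" s] by simp
    then have "((\<lambda>s. M * s ^ Suc n / Suc n) has_real_derivative M * (real (Suc n) * s ^ n) / Suc n) (at s)"
      by (intro DERIV_cdivide DERIV_cmult)
    then show ?thesis unfolding H_def by simp
  qed
  have cH: "\<And>x. isCont H x" using dH DERIV_isCont by blast
  have cg: "\<And>x. isCont g x" using d DERIV_isCont by blast
  have "H 0 - g 0 \<le> H z - g z"
    apply (rule DERIV_nonneg_imp_increasing_open[OF z])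
    subgoal for x using b[of x] by (intro exI[of _ "M * x ^ n - g' x"]) (auto intro!: derivative_eq_intros dH d)
    by (intro continuous_on_diff continuous_at_imp_continuous_on ballI cH cg)
  moreover have "H 0 + g 0 \<le> H z + g z"
    apply (rule DERIV_nonneg_imp_increasing_open[OF z])
    subgoal for x using b[of x] by (intro exI[of _ "M * x ^ n + g' x"]) (auto intro!: derivative_eq_intros dH d)
    by (intro continuous_on_add continuous_at_imp_continuous_on ballI cH cg)
  ultimately show ?thesis using g0 by (auto simp: H_def)
qed

lemma deriv_bound:
  fixes g g' :: "real \<Rightarrow> real"
  assumes d: "\<And>x. (g has_real_derivative g' x) (at x)" and g0: "g 0 = 0"
    and b: "\<And>s. \<bar>s\<bar> \<le> N \<Longrightarrow> \<bar>g' s\<bar> \<le> M * \<bar>s\<bar> ^ n" and z: "\<bar>z\<bar> \<le> N"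
  shows "\<bar>g z\<bar> \<le> M * \<bar>z\<bar> ^ Suc n / Suc n"
proof (cases "z \<ge> 0")
  case True
  have "\<bar>g z\<bar> \<le> M * z ^ Suc n / Suc n"
    apply (rule deriv_bound_pos[OF d g0 _ True])
    subgoal for s using b[of s] z by auto
    done
  then show ?thesis using True by simp
next
  case False
  have d2: "((\<lambda>s. g (- s)) has_real_derivative - g' (- x)) (at x)" for x
    using d[of "-x"] DERIV_mirror by blast
  have "\<bar>g (- (- z))\<bar> \<le> M * (- z) ^ Suc n / Suc n"
    apply (rule deriv_bound_pos[OF d2, of "-z" M n])
    subgoal using g0 by simp
    subgoal for s using b[of "-s"] z by auto
    using False by auto
  then show ?thesis using False by auto
qed



primrec UV :: "(real \<Rightarrow> real) \<Rightarrow> (real \<Rightarrow> real) \<Rightarrow> real \<Rightarrow> real \<Rightarrow> nat \<Rightarrow> (real \<Rightarrow> real) \<times> (real \<Rightarrow> real)" where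
  "UV al be a b 0 = (\<lambda>_. a, \<lambda>_. b)"
| "UV al be a b (Suc n) = (prim (snd (UV al be a b n)),
      prim (\<lambda>s. al s * snd (UV al be a b n) s + be s * fst (UV al be a b n) s))"

lemma cont_bound:
  fixes h :: "real \<Rightarrow> real"
  assumes "\<And>x. isCont h x"
  shows "\<exists>K\<ge>1. \<forall>s. \<bar>s\<bar> \<le> N \<longrightarrow> \<bar>h s\<bar> \<le> K"
proof -
  have "compact (h ` {-N..N})"
    by (intro compact_continuous_image continuous_at_imp_continuous_on ballI assms) auto
  then obtain B where B: "\<forall>y\<in>h ` {-N..N}. norm y \<le> B"
    using compact_imp_bounded bounded_iff by metis
  have "\<bar>h s\<bar> \<le> max 1 B" if "\<bar>s\<bar> \<le> N" for s
  proof -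
    have "s \<in> {-N..N}" using that by auto
    then have "\<bar>h s\<bar> \<le> B" using B by auto
    then show ?thesis by linarith
  qed
  then show ?thesis by (intro exI[of _ "max 1 B"]) auto
qed

context
  fixes al be :: "real \<Rightarrow> real" and a b :: real
  assumes ca: "\<And>x. isCont al x" and cb: "\<And>x. isCont be x"
begin

abbreviation "U n \<equiv> fst (UV al be a b n)"
abbreviation "V n \<equiv> snd (UV al be a b n)"

lemma UV_cont: "(\<forall>x. isCont (U n) x) \<and> (\<forall>x. isCont (V n) x)"
proof (induction n)
  case 0 then show ?case by simp
next
  case (Suc n)
  have c1: "\<And>x. isCont (V n) x" using Suc by blast
  have c2: "\<And>x. isCont (\<lambda>s. al s * V n s + be s * U n s) x"
    using Suc ca cb by (auto intro!: continuous_intros)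
  show ?case using DERIV_isCont[OF prim(2)[OF c1]] DERIV_isCont[OF prim(2)[OF c2]] by simp
qed

lemma UV_deriv:
  "(U (Suc n) has_real_derivative V n x) (at x)"
  "(V (Suc n) has_real_derivative al x * V n x + be x * U n x) (at x)"
  "U (Suc n) 0 = 0" "V (Suc n) 0 = 0"
proof -
  have c1: "\<And>x. isCont (V n) x" using UV_cont by blast
  have c2: "\<And>x. isCont (\<lambda>s. al s * V n s + be s * U n s) x"
    using UV_cont ca cb by (auto intro!: continuous_intros)
  show "(U (Suc n) has_real_derivative V n x) (at x)"
    "(V (Suc n) has_real_derivative al x * V n x + be x * U n x) (at x)"
    "U (Suc n) 0 = 0" "V (Suc n) 0 = 0"
    using prim[OF c1] prim[OF c2] by auto
qed

lemma UV_bound: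
  assumes K1: "K \<ge> 1" and K: "\<And>s. \<bar>s\<bar> \<le> N \<Longrightarrow> \<bar>al s\<bar> + \<bar>be s\<bar> \<le> K"
  shows "\<bar>z\<bar> \<le> N \<Longrightarrow> \<bar>U n z\<bar> \<le> (\<bar>a\<bar> + \<bar>b\<bar>) * K ^ n * \<bar>z\<bar> ^ n / fact n
        \<and> \<bar>V n z\<bar> \<le> (\<bar>a\<bar> + \<bar>b\<bar>) * K ^ n * \<bar>z\<bar> ^ n / fact n"
proof (induction n arbitrary: z)
  case 0 then show ?case by simp
next
  case (Suc n)
  define C where "C = \<bar>a\<bar> + \<bar>b\<bar>"
  have C0: "C \<ge> 0" unfolding C_def by simp
  have IH: "\<And>s. \<bar>s\<bar> \<le> N \<Longrightarrow> \<bar>U n s\<bar> \<le> C * K ^ n / fact n * \<bar>s\<bar> ^ n \<and> \<bar>V n s\<bar> \<le> C * K ^ n / fact n * \<bar>s\<bar> ^ n"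
    using Suc.IH unfolding C_def by (simp add: field_simps)
  have "\<bar>U (Suc n) z\<bar> \<le> C * K ^ n / fact n * \<bar>z\<bar> ^ Suc n / Suc n"
    by (rule deriv_bound[OF UV_deriv(1) UV_deriv(3)]) (use IH Suc.prems in auto)
  also have "\<dots> = C * K ^ n * \<bar>z\<bar> ^ Suc n / fact (Suc n)"
    by (simp add: field_simps)
  also have "\<dots> \<le> C * K ^ Suc n * \<bar>z\<bar> ^ Suc n / fact (Suc n)"
  proof -
    have "K ^ n \<le> K ^ Suc n" using K1 by (simp add: power_increasing)
    then show ?thesis using C0
      by (intro divide_right_mono mult_right_mono mult_left_mono) auto
  qed
  finally have A: "\<bar>U (Suc n) z\<bar> \<le> C * K ^ Suc n * \<bar>z\<bar> ^ Suc n / fact (Suc n)" .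
  have dV: "\<bar>al s * V n s + be s * U n s\<bar> \<le> C * K ^ Suc n / fact n * \<bar>s\<bar> ^ n" if s: "\<bar>s\<bar> \<le> N" for s
  proof -
    have "\<bar>al s * V n s + be s * U n s\<bar> \<le> \<bar>al s\<bar> * \<bar>V n s\<bar> + \<bar>be s\<bar> * \<bar>U n s\<bar>"
      by (simp add: abs_mult[symmetric] abs_triangle_ineq)
    also have "\<dots> \<le> \<bar>al s\<bar> * (C * K ^ n / fact n * \<bar>s\<bar> ^ n) + \<bar>be s\<bar> * (C * K ^ n / fact n * \<bar>s\<bar> ^ n)"
      using IH[OF s] by (intro add_mono mult_left_mono) auto
    also have "\<dots> = (\<bar>al s\<bar> + \<bar>be s\<bar>) * (C * K ^ n / fact n * \<bar>s\<bar> ^ n)"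
      by (rule distrib_right[symmetric])
    also have "\<dots> \<le> K * (C * K ^ n / fact n * \<bar>s\<bar> ^ n)"
      using K[OF s] C0 by (intro mult_right_mono) auto
    finally show ?thesis by (simp add: field_simps)
  qed
  have "\<bar>V (Suc n) z\<bar> \<le> C * K ^ Suc n / fact n * \<bar>z\<bar> ^ Suc n / Suc n"
    by (rule deriv_bound[OF UV_deriv(2) UV_deriv(4)]) (use dV Suc.prems in auto)
  also have "\<dots> = C * K ^ Suc n * \<bar>z\<bar> ^ Suc n / fact (Suc n)"
    by (simp add: field_simps)
  finally show ?case using A unfolding C_def by simp
qed

lemma ode_exists:
  "\<exists>u v. u 0 = a \<and> v 0 = b \<and> (\<forall>x. (u has_real_derivative v x) (at x) \<and>
        (v has_real_derivative al x * v x + be x * u x) (at x))"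
proof -
  define u where "u z = (\<Sum>n. U n z)" for z
  define v where "v z = (\<Sum>n. V n z)" for z
  define C where "C = \<bar>a\<bar> + \<bar>b\<bar>"
  have C0: "C \<ge> 0" unfolding C_def by simp
  have main: "(\<forall>z. \<bar>z\<bar> \<le> N \<longrightarrow> summable (\<lambda>n. U n z) \<and> summable (\<lambda>n. V n z))
     \<and> (\<forall>x. \<bar>x\<bar> < N \<longrightarrow> (u has_real_derivative v x) (at x) \<and>
        (v has_real_derivative al x * v x + be x * u x) (at x))" for N
  proof -
    obtain K where K1: "K \<ge> 1" and K: "\<And>s. \<bar>s\<bar> \<le> N \<Longrightarrow> \<bar>al s\<bar> + \<bar>be s\<bar> \<le> K"
    proof -
      have "\<And>x. isCont (\<lambda>s. \<bar>al s\<bar> + \<bar>be s\<bar>) x" using ca cb by (auto intro!: continuous_intros)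
      from cont_bound[OF this, of N] that show ?thesis by force
    qed
    define m where "m n = C * (K * N) ^ n / fact n" for n
    have sm: "summable m"
      using summable_mult[OF summable_exp[of "K * N"], of C]
      unfolding m_def by (simp add: field_simps)
    have bnd: "\<bar>U n z\<bar> \<le> m n \<and> \<bar>V n z\<bar> \<le> m n" if z: "\<bar>z\<bar> \<le> N" for n z
    proof -
      have p: "\<bar>z\<bar> ^ n \<le> N ^ n" using z by (intro power_mono) auto
      have "C * K ^ n * \<bar>z\<bar> ^ n \<le> C * K ^ n * N ^ n"
        using K1 C0 p by (intro mult_left_mono) auto
      then have "C * K ^ n * \<bar>z\<bar> ^ n / fact n \<le> m n"
        unfolding m_def power_mult_distrib
        by (intro divide_right_mono) (auto simp: mult.assoc)
      then show ?thesis using UV_bound[OF K1 K z, of n] unfolding C_def by linarith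
    qed
    have sU: "summable (\<lambda>n. U n z)" and sV: "summable (\<lambda>n. V n z)" if "\<bar>z\<bar> \<le> N" for z
      using bnd[OF that] sm by (auto intro!: summable_comparison_test[of _ m])
    define S where "S = {-N..N}"
    have cS: "convex S" unfolding S_def by simp
    show ?thesis
    proof (intro conjI allI impI)
      fix z assume "\<bar>z\<bar> \<le> N" then show "summable (\<lambda>n. U n z)" "summable (\<lambda>n. V n z)"
        using sU sV by auto
    next
      fix x :: real assume x: "\<bar>x\<bar> < N"
      have xS: "x \<in> interior S" unfolding S_def using x by auto
      have zS: "0 \<in> S" unfolding S_def using x by auto
      have inS: "y \<in> S \<Longrightarrow> \<bar>y\<bar> \<le> N" for y unfolding S_def by auto
      define f1 where "f1 n y = (case n of 0 \<Rightarrow> 0 | Suc k \<Rightarrow> V k y)" for n y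
      define f2 where "f2 n y = (case n of 0 \<Rightarrow> 0 | Suc k \<Rightarrow> al y * V k y + be y * U k y)" for n y
      define m1 where "m1 n = (case n of 0 \<Rightarrow> 0 | Suc k \<Rightarrow> m k)" for n
      define m2 where "m2 n = (case n of 0 \<Rightarrow> 0 | Suc k \<Rightarrow> K * m k + K * m k)" for n
      have sm1: "summable m1" using sm unfolding m1_def by (subst summable_Suc_iff[symmetric]) simp
      have sm2: "summable m2" using summable_add[OF summable_mult[OF sm, of K] summable_mult[OF sm, of K]]
        unfolding m2_def by (subst summable_Suc_iff[symmetric]) simp
      have d1: "(U n has_field_derivative f1 n y) (at y within S)" for n y
      proof (cases n)
        case (Suc k) then show ?thesis
          using has_field_derivative_at_within[OF UV_deriv(1)[of k y]] by (simp add: f1_def del: UV.simps)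
      qed (simp add: f1_def)
      have d2: "(V n has_field_derivative f2 n y) (at y within S)" for n y
      proof (cases n)
        case (Suc k) then show ?thesis
          using has_field_derivative_at_within[OF UV_deriv(2)[of k y]] by (simp add: f2_def del: UV.simps)
      qed (simp add: f2_def)
      have u1: "uniformly_convergent_on S (\<lambda>n y. \<Sum>i<n. f1 i y)"
        by (rule Weierstrass_m_test'[OF _ sm1]) (auto simp: f1_def m1_def bnd inS split: nat.split)
      have b2: "norm (f2 n y) \<le> m2 n" if "y \<in> S" for n y
      proof (cases n)
        case (Suc k)
        have yN: "\<bar>y\<bar> \<le> N" using inS that .
        have "\<bar>al y * V k y + be y * U k y\<bar> \<le> \<bar>al y\<bar> * \<bar>V k y\<bar> + \<bar>be y\<bar> * \<bar>U k y\<bar>"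
          by (simp add: abs_mult[symmetric] abs_triangle_ineq)
        also have "\<dots> \<le> K * m k + K * m k"
          using bnd[OF yN, of k] K[OF yN]
          by (intro add_mono mult_mono) auto
        finally show ?thesis using Suc by (simp add: f2_def m2_def)
      qed (simp add: f2_def m2_def)
      have u2: "uniformly_convergent_on S (\<lambda>n y. \<Sum>i<n. f2 i y)"
        by (rule Weierstrass_m_test'[OF b2 sm2])
      have s0U: "summable (\<lambda>n. U n 0)" and s0V: "summable (\<lambda>n. V n 0)" using sU sV x by auto
      have D1: "((\<lambda>x. \<Sum>n. U n x) has_field_derivative (\<Sum>n. f1 n x)) (at x)"
        by (rule has_field_derivative_series'(2)[OF cS d1 u1 zS s0U xS])
      have D2: "((\<lambda>x. \<Sum>n. V n x) has_field_derivative (\<Sum>n. f2 n x)) (at x)"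
        by (rule has_field_derivative_series'(2)[OF cS d2 u2 zS s0V xS])
      have xN: "\<bar>x\<bar> \<le> N" using x by simp
      have e1: "(\<Sum>n. f1 n x) = v x"
      proof -
        have "summable (\<lambda>n. f1 (Suc n) x)" using sV[OF xN] by (simp add: f1_def)
        then have s: "summable (\<lambda>n. f1 n x)" using summable_Suc_iff[of "\<lambda>n. f1 n x"] by simp
        show ?thesis using suminf_split_head[OF s] by (simp add: f1_def v_def)
      qed
      have e2: "(\<Sum>n. f2 n x) = al x * v x + be x * u x"
      proof -
        have ss: "summable (\<lambda>n. al x * V n x + be x * U n x)"
          using sV[OF xN] sU[OF xN] by (intro summable_add summable_mult)
        have "summable (\<lambda>n. f2 (Suc n) x)" using ss by (simp add: f2_def)
        then have s: "summable (\<lambda>n. f2 n x)" using summable_Suc_iff[of "\<lambda>n. f2 n x"] by simp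
        have "(\<Sum>n. f2 n x) = (\<Sum>n. al x * V n x + be x * U n x)"
          using suminf_split_head[OF s] by (simp add: f2_def)
        also have "\<dots> = al x * v x + be x * u x"
          using sV[OF xN] sU[OF xN] unfolding u_def v_def
          by (simp add: suminf_add[symmetric] suminf_mult summable_mult)
        finally show ?thesis .
      qed
      show "(u has_real_derivative v x) (at x)" using D1 e1 unfolding u_def by simp
      show "(v has_real_derivative al x * v x + be x * u x) (at x)" using D2 e2 unfolding v_def by simp
    qed
  qed
  have sU0: "summable (\<lambda>n. U n 0)" and sV0: "summable (\<lambda>n. V n 0)" using main[of 1] by auto
  have "u 0 = a" using suminf_split_head[OF sU0] by (simp add: u_def UV_deriv del: UV.simps(2))
  moreover have "v 0 = b" using suminf_split_head[OF sV0] by (simp add: v_def UV_deriv del: UV.simps(2))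
  moreover have "(u has_real_derivative v x) (at x) \<and> (v has_real_derivative al x * v x + be x * u x) (at x)" for x
    using main[of "\<bar>x\<bar> + 1"] by auto
  ultimately show ?thesis by blast
qed

end


definition csol :: "real \<Rightarrow> (real \<Rightarrow> real) \<Rightarrow> (real \<Rightarrow> complex) \<Rightarrow> (real \<Rightarrow> complex) \<Rightarrow> bool" where
  "csol tau B y1 y2 \<longleftrightarrow> (\<forall>z. (y1 has_vector_derivative y2 z) (at z) \<and>
     (y2 has_vector_derivative (of_real tau * y2 z - of_real (B z) * y1 z)) (at z))"

lemma exp_sol:
  fixes g :: "real \<Rightarrow> complex"
  assumes d: "\<And>z. (g has_vector_derivative (of_real tau * g z)) (at z)"
  shows "g z = of_real (exp (tau * z)) * g 0"
proof -
  define h where "h z = of_real (exp (- tau * z)) * g z" for z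
  have dh: "(h has_vector_derivative 0) (at z within UNIV)" for z
  proof -
    have e: "((\<lambda>z. exp (- tau * z)) has_real_derivative (- tau) * exp (- tau * z)) (at z)"
      by (auto intro!: derivative_eq_intros)
    have "(h has_vector_derivative (of_real (exp (- tau * z)) * (of_real tau * g z)
        + of_real ((- tau) * exp (- tau * z)) * g z)) (at z)"
      unfolding h_def by (intro has_vector_derivative_mult has_vector_derivative_of_real e d)
    then show ?thesis by (simp add: algebra_simps)
  qed
  obtain c where c: "\<And>x. x \<in> UNIV \<Longrightarrow> h x = c"
    using has_vector_derivative_zero_constant[OF convex_UNIV dh] by blast
  have "h z = h 0" using c by simp
  then have "of_real (exp (- tau * z)) * g z = g 0" by (simp add: h_def)
  then have "of_real (exp (tau * z)) * (of_real (exp (- tau * z)) * g z) = of_real (exp (tau * z)) * g 0"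
    by simp
  moreover have "of_real (exp (tau * z)) * (of_real (exp (- tau * z)) * g z) = g z"
    by (simp add: mult.assoc[symmetric] of_real_mult[symmetric] exp_add[symmetric])
  ultimately show ?thesis by simp
qed

lemma wronsk:
  assumes u: "csol tau B u1 u2" and w: "csol tau B w1 w2"
  shows "u1 z * w2 z - u2 z * w1 z = of_real (exp (tau * z)) * (u1 0 * w2 0 - u2 0 * w1 0)"
proof -
  have "((\<lambda>z. u1 z * w2 z - u2 z * w1 z) has_vector_derivative
         (of_real tau * (u1 z * w2 z - u2 z * w1 z))) (at z)" for z
  proof -
    have "((\<lambda>z. u1 z * w2 z - u2 z * w1 z) has_vector_derivative
         (u1 z * (of_real tau * w2 z - of_real (B z) * w1 z) + u2 z * w2 z
          - (u2 z * w2 z + (of_real tau * u2 z - of_real (B z) * u1 z) * w1 z))) (at z)"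
      using u w unfolding csol_def
      by (intro has_vector_derivative_diff has_vector_derivative_mult) auto
    then show ?thesis by (simp add: algebra_simps)
  qed
  from exp_sol[OF this] show ?thesis .
qed

lemma repr:
  assumes a: "csol tau B ua va" and b: "csol tau B ub vb"
    and i: "ua 0 = 1" "va 0 = 0" "ub 0 = 0" "vb 0 = 1"
    and y: "csol tau B y1 y2"
  shows "y1 z = y1 0 * ua z + y2 0 * ub z \<and> y2 z = y1 0 * va z + y2 0 * vb z"
proof -
  define E where "E = (of_real (exp (tau * z)) :: complex)"
  have E: "E \<noteq> 0" unfolding E_def by simp
  have Wab: "ua z * vb z - va z * ub z = E" using wronsk[OF a b, of z] i unfolding E_def by simp
  have Wa: "ua z * y2 z - va z * y1 z = E * y2 0" using wronsk[OF a y, of z] i unfolding E_def by simp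
  have Wb: "ub z * y2 z - vb z * y1 z = - E * y1 0" using wronsk[OF b y, of z] i unfolding E_def by simp
  have "E * y1 z = E * (y1 0 * ua z + y2 0 * ub z)"
  proof -
    have "E * (y1 0 * ua z + y2 0 * ub z) = ub z * (E * y2 0) - ua z * (- E * y1 0)"
      by (simp add: algebra_simps)
    also have "\<dots> = (ua z * vb z - va z * ub z) * y1 z"
      unfolding Wa[symmetric] Wb[symmetric] by (simp add: algebra_simps)
    finally show ?thesis using Wab by metis
  qed
  moreover have "E * y2 z = E * (y1 0 * va z + y2 0 * vb z)"
  proof -
    have "E * (y1 0 * va z + y2 0 * vb z) = vb z * (E * y2 0) - va z * (- E * y1 0)"
      by (simp add: algebra_simps)
    also have "\<dots> = (ua z * vb z - va z * ub z) * y2 z"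
      unfolding Wa[symmetric] Wb[symmetric] by (simp add: algebra_simps)
    finally show ?thesis using Wab by metis
  qed
  ultimately show ?thesis using E by simp
qed

definition emb :: "2 \<Rightarrow> 2 \<Rightarrow> complex \<Rightarrow> complex^2^2" where
  "emb i j c = (\<chi> k l. if k = i \<and> l = j then c else 0)"

lemma emb_bl: "bounded_linear (emb i j)"
proof -
  have "linear (emb i j)" by (rule linearI) (auto simp: emb_def vec_eq_iff)
  then show ?thesis using linear_conv_bounded_linear by blast
qed

lemma mat_decomp: "M = emb 1 1 (M$1$1) + emb 1 2 (M$1$2) + emb 2 1 (M$2$1) + emb 2 2 (M$2$2)"
  by (simp add: vec_eq_iff emb_def forall_2)

lemma comp_deriv:
  fixes F :: "real \<Rightarrow> complex^2^2"
  assumes "\<And>i j. ((\<lambda>z. F z $ i $ j) has_vector_derivative D $ i $ j) (at x)"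
  shows "(F has_vector_derivative D) (at x)"
proof -
  have "((\<lambda>z. emb 1 1 (F z$1$1) + emb 1 2 (F z$1$2) + emb 2 1 (F z$2$1) + emb 2 2 (F z$2$2))
     has_vector_derivative (emb 1 1 (D$1$1) + emb 1 2 (D$1$2) + emb 2 1 (D$2$1) + emb 2 2 (D$2$2))) (at x)"
    by (intro has_vector_derivative_add bounded_linear.has_vector_derivative[OF emb_bl] assms)
  then show ?thesis using mat_decomp[symmetric] by simp
qed

lemma comp_deriv2:
  fixes F :: "real \<Rightarrow> complex^2^2"
  assumes "(F has_vector_derivative D) (at x)"
  shows "((\<lambda>z. F z $ i $ j) has_vector_derivative D $ i $ j) (at x)"
proof -
  have "bounded_linear (\<lambda>M::complex^2^2. M $ i $ j)"
    using bounded_linear_compose[OF bounded_linear_vec_nth[of j] bounded_linear_vec_nth[of i]] by (simp add: o_def)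
  from bounded_linear.has_vector_derivative[OF this assms] show ?thesis .
qed

lemma periodic_int:
  fixes g :: "real \<Rightarrow> 'a"
  assumes "\<And>z. g (z + T) = g z"
  shows "g (z + of_int n * T) = g z"
proof -
  have "\<forall>z. g (z + of_int n * T) = g z"
  proof (induction n rule: int_induct[where k=0])
    case base then show ?case by simp
  next
    case (step1 i)
    show ?case
    proof
      fix z
      have "g (z + of_int (i + 1) * T) = g ((z + of_int i * T) + T)" by (simp add: algebra_simps)
      then show "g (z + of_int (i + 1) * T) = g z" using assms step1 by simp
    qed
  next
    case (step2 i)
    show ?case
    proof
      fix z
      have "g (z + of_int i * T) = g ((z + of_int (i - 1) * T) + T)" by (simp add: algebra_simps)
      then show "g (z + of_int (i - 1) * T) = g z" using assms step2 by metis
    qed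
  qed
  then show ?thesis by blast
qed

lemma pow_unbounded:
  fixes x c L :: real
  assumes "x > 1" "c > 0" "\<And>k::nat. c * x ^ k \<le> L"
  shows False
proof -
  obtain k where "L / c < x ^ k" using real_arch_pow[OF assms(1)] by blast
  then have "L < c * x ^ k" using assms(2) by (simp add: field_simps)
  then show False using assms(3)[of k] by simp
qed

lemma unit_mod:
  fixes rho e0 :: complex
  assumes e0: "e0 \<noteq> 0" and f: "\<And>k::nat. cmod (rho ^ k * e0) \<le> K"
    and bk: "\<And>k::nat. cmod e0 \<le> cmod rho ^ k * K"
  shows "cmod rho = 1"
proof (rule ccontr)
  assume ne: "cmod rho \<noteq> 1"
  have c: "cmod e0 > 0" using e0 by simp
  show False
  proof (cases "cmod rho > 1")
    case True
    show False by (rule pow_unbounded[OF True c, of K]) (use f in \<open>simp add: norm_mult norm_power mult.commute\<close>)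
  next
    case False
    then have lt: "cmod rho < 1" using ne by simp
    show False
    proof (cases "rho = 0")
      case True
      then show False using bk[of 1] c by simp
    next
      case False
      then have r0: "cmod rho > 0" by simp
      have "1 < 1 / cmod rho" using lt r0 by (simp add: field_simps)
      moreover have "cmod e0 * (1 / cmod rho) ^ k \<le> K" for k
      proof -
        have "cmod e0 \<le> cmod rho ^ k * K" by (rule bk)
        then show ?thesis using r0 by (simp add: field_simps power_divide)
      qed
      ultimately show False using pow_unbounded c by blast
    qed
  qed
qed

lemma final_alg:
  fixes rho :: complex and t d :: real
  assumes "rho\<^sup>2 - of_real t * rho + of_real d = 0" "cmod rho = 1" "d \<noteq> 1"
  shows "rho\<^sup>2 = 1"
proof -
  obtain x y where r: "rho = Complex x y" by (cases rho)
  have n: "x\<^sup>2 + y\<^sup>2 = 1" using assms(2) r by (simp add: cmod_def)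
  have re: "x\<^sup>2 - y\<^sup>2 - t * x + d = 0" and im: "2 * x * y - t * y = 0"
    using assms(1) r by (auto simp: complex_eq_iff power2_eq_square algebra_simps)
  have "y = 0"
  proof (rule ccontr)
    assume "y \<noteq> 0"
    then have "t = 2 * x" using im by (simp add: algebra_simps)
    then have "d = x\<^sup>2 + y\<^sup>2" using re by (simp add: power2_eq_square algebra_simps)
    then show False using n assms(3) by simp
  qed
  then show ?thesis using r n by (simp add: complex_eq_iff power2_eq_square)
qed



lemma inj2:
  fixes m11 m12 m21 m22 X Y x y :: complex
  assumes d: "m11 * m22 - m12 * m21 \<noteq> 0"
    and e1: "m11 * X + m12 * Y = m11 * x + m12 * y"
    and e2: "m21 * X + m22 * Y = m21 * x + m22 * y"
  shows "X = x \<and> Y = y"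
proof -
  have "(m11 * m22 - m12 * m21) * (X - x) = m22 * ((m11 * X + m12 * Y) - (m11 * x + m12 * y)) - m12 * ((m21 * X + m22 * Y) - (m21 * x + m22 * y))"
    by (simp add: algebra_simps)
  then have "(m11 * m22 - m12 * m21) * (X - x) = 0" using e1 e2 by simp
  then have 1: "X = x" using d by simp
  have "(m11 * m22 - m12 * m21) * (Y - y) = m11 * ((m21 * X + m22 * Y) - (m21 * x + m22 * y)) - m21 * ((m11 * X + m12 * Y) - (m11 * x + m12 * y))"
    by (simp add: algebra_simps)
  then have "(m11 * m22 - m12 * m21) * (Y - y) = 0" using e1 e2 by simp
  then have "Y = y" using d by simp
  with 1 show ?thesis by simp
qed

lemma charpoly:
  fixes m11 m12 m21 m22 a0 b0 rho :: complex
  assumes e1: "rho * a0 = m11 * a0 + m12 * b0" and e2: "rho * b0 = m21 * a0 + m22 * b0"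
    and nz: "a0 \<noteq> 0 \<or> b0 \<noteq> 0"
  shows "rho\<^sup>2 - (m11 + m22) * rho + (m11 * m22 - m12 * m21) = 0"
proof -
  have "(rho\<^sup>2 - (m11 + m22) * rho + (m11 * m22 - m12 * m21)) * a0
     = (rho - m22) * (rho * a0 - (m11 * a0 + m12 * b0)) + m12 * ((rho * b0) - (m21 * a0 + m22 * b0))"
    by (simp add: algebra_simps power2_eq_square)
  then have A: "(rho\<^sup>2 - (m11 + m22) * rho + (m11 * m22 - m12 * m21)) * a0 = 0" using e1 e2 by simp
  have "(rho\<^sup>2 - (m11 + m22) * rho + (m11 * m22 - m12 * m21)) * b0
     = (rho - m11) * (rho * b0 - (m21 * a0 + m22 * b0)) + m21 * ((rho * a0) - (m11 * a0 + m12 * b0))"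
    by (simp add: algebra_simps power2_eq_square)
  then have B: "(rho\<^sup>2 - (m11 + m22) * rho + (m11 * m22 - m12 * m21)) * b0 = 0" using e1 e2 by simp
  show ?thesis using A B nz by auto
qed

lemma Drec_alg:
  fixes m11 m12 m21 m22 x y :: complex
  shows "(m11 * x + m12 * y) * (m21 * (m11 * x + m12 * y) + m22 * (m21 * x + m22 * y))
       - (m21 * x + m22 * y) * (m11 * (m11 * x + m12 * y) + m12 * (m21 * x + m22 * y))
       = (m11 * m22 - m12 * m21) * (x * (m21 * x + m22 * y) - y * (m11 * x + m12 * y))"
  by (simp add: algebra_simps power2_eq_square)

lemma shift_deriv:
  assumes "(p has_vector_derivative D) (at (z + s))"
  shows "((\<lambda>z. p (z + s)) has_vector_derivative D) (at z)"
proof -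
  have "((\<lambda>z. z + s) has_derivative (\<lambda>h. h)) (at z)" by (auto intro!: derivative_eq_intros)
  from diff_chain_at[OF this assms[unfolded has_vector_derivative_def]]
  show ?thesis by (simp add: has_vector_derivative_def o_def)
qed



theorem lemma3p5:
  fixes c T lam :: real and f :: "real \<Rightarrow> real"
  assumes "periodic_traveling_wave c f T"
    and "c \<noteq> 0" and "c\<^sup>2 \<noteq> 1"
    and "lam \<noteq> 0"
    and "complex_of_real lam \<in> sigma_P c f"
  shows "\<exists>rho. floquet_multiplier c f T (complex_of_real lam) rho \<and> rho\<^sup>2 = 1"
proof -
  from assms(1) obtain f1 f2 where fd: "\<And>z. (f has_real_derivative f1 z) (at z)"
    and T0: "T > 0" and per: "period_mod_2pi f T"
    unfolding periodic_traveling_wave_def traveling_wave_def fundamental_period_def by blast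
  define g where "g = tw_gamma c"
  have g0: "g \<noteq> 0" using assms(3) unfolding g_def tw_gamma_def by simp
  define tau where "tau = 2 * c * g * lam"
  have tau0: "tau \<noteq> 0" using assms(2,4) g0 unfolding tau_def by simp
  define B where "B z = g * (lam\<^sup>2 + cos (f z))" for z
  have cB: "isCont (\<lambda>z. - B z) x" for x
    unfolding B_def using DERIV_isCont[OF fd] by (auto intro!: continuous_intros)
  have Bper: "B (z + of_int n * T) = B z" for z n
  proof (rule periodic_int)
    fix z
    from per obtain k :: int where "f (z + T) = f z + 2 * pi * of_int k"
      unfolding period_mod_2pi_def by blast
    then show "B (z + T) = B z" by (simp add: B_def cos_add)
  qed
  have cT: "isCont (\<lambda>_. tau) x" for x by simp
  obtain ua va where ua: "ua 0 = 1" "va 0 = 0"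
    and dua: "\<And>x. (ua has_real_derivative va x) (at x) \<and> (va has_real_derivative tau * va x + - B x * ua x) (at x)"
    using ode_exists[of "\<lambda>_. tau" "\<lambda>z. - B z" 1 0, OF cT cB] by blast
  obtain ub vb where ub: "ub 0 = 0" "vb 0 = 1"
    and dub: "\<And>x. (ub has_real_derivative vb x) (at x) \<and> (vb has_real_derivative tau * vb x + - B x * ub x) (at x)"
    using ode_exists[of "\<lambda>_. tau" "\<lambda>z. - B z" 0 1, OF cT cB] by blast
  have lift: "csol tau B (\<lambda>z. of_real (u z)) (\<lambda>z. of_real (v z))"
    if d: "\<And>x. (u has_real_derivative v x) (at x) \<and> (v has_real_derivative tau * v x + - B x * u x) (at x)"
    for u v
    unfolding csol_def
  proof (intro allI conjI)
    fix z
    show "((\<lambda>z. complex_of_real (u z)) has_vector_derivative complex_of_real (v z)) (at z)"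
      using d by (intro has_vector_derivative_of_real) auto
    have "((\<lambda>z. complex_of_real (v z)) has_vector_derivative complex_of_real (tau * v z + - B z * u z)) (at z)"
      using d by (intro has_vector_derivative_of_real) auto
    then show "((\<lambda>z. complex_of_real (v z)) has_vector_derivative
        of_real tau * of_real (v z) - of_real (B z) * of_real (u z)) (at z)"
      by (simp add: algebra_simps)
  qed
  note la = lift[OF dua] and lb = lift[OF dub]
  have REP: "y1 z = y1 0 * of_real (ua z) + y2 0 * of_real (ub z) \<and>
             y2 z = y1 0 * of_real (va z) + y2 0 * of_real (vb z)" if "csol tau B y1 y2" for y1 y2 z
    by (rule repr[OF la lb _ _ _ _ that]) (auto simp: ua ub)
  define F :: "real \<Rightarrow> complex^2^2" where "F z = (\<chi> i j. complex_of_real (if i = 1 then (if j = 1 then ua z else ub z)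
       else (if j = 1 then va z else vb z)))" for z
  have F0: "F 0 = mat 1" by (simp add: F_def vec_eq_iff mat_def forall_2 ua ub)
  have PM1: "(P_matrix c f (of_real lam) z ** G) $ 1 $ j = G $ 2 $ j" for z G j
    by (simp add: P_matrix_def matrix_matrix_mult_def sum_2)
  have PM2: "(P_matrix c f (of_real lam) z ** G) $ 2 $ j = of_real tau * G $ 2 $ j - of_real (B z) * G $ 1 $ j" for z G j
    by (simp add: P_matrix_def matrix_matrix_mult_def sum_2 tau_def B_def g_def algebra_simps)
  have fm: "fundamental_matrix c f (of_real lam) F"
    unfolding fundamental_matrix_def
  proof (intro conjI allI F0 comp_deriv)
    fix z i j
    show "((\<lambda>z. F z $ i $ j) has_vector_derivative (P_matrix c f (complex_of_real lam) z ** F z) $ i $ j) (at z)"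
      using exhaust_2[of i] exhaust_2[of j] la lb unfolding csol_def
      by (auto simp: PM1 PM2 F_def)
  qed
  have uniq: "G = F" if "fundamental_matrix c f (of_real lam) G" for G
  proof -
    from that have G0: "G 0 = mat 1" and dG: "\<And>z. (G has_vector_derivative (P_matrix c f (of_real lam) z ** G z)) (at z)"
      unfolding fundamental_matrix_def by auto
    have cs: "csol tau B (\<lambda>z. G z $ 1 $ j) (\<lambda>z. G z $ 2 $ j)" for j
      unfolding csol_def
    proof
      fix z
      show "((\<lambda>z. G z $ 1 $ j) has_vector_derivative G z $ 2 $ j) (at z) \<and>
         ((\<lambda>z. G z $ 2 $ j) has_vector_derivative of_real tau * G z $ 2 $ j - of_real (B z) * G z $ 1 $ j) (at z)"
        using comp_deriv2[OF dG[of z], of 1 j] comp_deriv2[OF dG[of z], of 2 j] by (simp add: PM1 PM2)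
    qed
    show ?thesis
    proof
      fix z
      show "G z = F z"
        using REP[OF cs[of 1], of z] REP[OF cs[of 2], of z] G0
        by (simp add: vec_eq_iff forall_2 F_def mat_def)
    qed
  qed
  have mono: "monodromy c f T (of_real lam) = F T"
    unfolding monodromy_def
  proof (rule the_equality)
    show "\<exists>G. fundamental_matrix c f (of_real lam) G \<and> F T = G T" using fm by blast
  next
    fix M assume "\<exists>G. fundamental_matrix c f (of_real lam) G \<and> M = G T"
    then show "M = F T" using uniq by blast
  qed
  from assms(5) obtain p where sp: "solves_P c f (of_real lam) p" and nz: "\<exists>z. p z \<noteq> 0"
    and bd: "bounded (range p)" unfolding sigma_P_def by blast
  from sp obtain p' p'' where dp: "\<And>z. (p has_vector_derivative p' z) (at z)"
    and dp': "\<And>z. (p' has_vector_derivative p'' z) (at z)"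
    and eq: "\<And>z. p'' z - 2 * of_real c * of_real (tw_gamma c) * of_real lam * p' z
                      + of_real (tw_gamma c) * ((of_real lam)\<^sup>2 + of_real (cos (f z))) * p z = 0"
    unfolding solves_P_def by blast
  have eq2: "p'' w = of_real tau * p' w - of_real (B w) * p w" for w
  proof -
    have "p'' w = p'' w - (p'' w - 2 * of_real c * of_real (tw_gamma c) * of_real lam * p' w
                      + of_real (tw_gamma c) * ((of_real lam)\<^sup>2 + of_real (cos (f w))) * p w)"
      using eq[of w] by simp
    also have "\<dots> = of_real tau * p' w - of_real (B w) * p w"
      by (simp add: tau_def B_def g_def algebra_simps)
    finally show ?thesis .
  qed
  have shsol: "csol tau B (\<lambda>z. p (z + of_int n * T)) (\<lambda>z. p' (z + of_int n * T))" for n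
    unfolding csol_def
  proof
    fix z
    show "((\<lambda>z. p (z + of_int n * T)) has_vector_derivative p' (z + of_int n * T)) (at z) \<and>
          ((\<lambda>z. p' (z + of_int n * T)) has_vector_derivative
             of_real tau * p' (z + of_int n * T) - of_real (B z) * p (z + of_int n * T)) (at z)"
      using shift_deriv[where z=z and s="of_int n * T", OF dp] shift_deriv[where z=z and s="of_int n * T", OF dp']
        eq2[of "z + of_int n * T"] Bper[of z n] by simp
  qed
  define a where "a n = p (of_int n * T)" for n :: int
  define b where "b n = p' (of_int n * T)" for n :: int
  have R: "p (z + of_int n * T) = a n * of_real (ua z) + b n * of_real (ub z) \<and>
           p' (z + of_int n * T) = a n * of_real (va z) + b n * of_real (vb z)" for z n
    using REP[OF shsol[of n], of z] by (simp add: a_def b_def)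
  define M11 where "M11 = complex_of_real (ua T)"
  define M12 where "M12 = complex_of_real (ub T)"
  define M21 where "M21 = complex_of_real (va T)"
  define M22 where "M22 = complex_of_real (vb T)"
  have arec: "a (n + 1) = M11 * a n + M12 * b n" and brec: "b (n + 1) = M21 * a n + M22 * b n" for n
  proof -
    have e: "of_int (n + 1) * T = T + of_int n * T" by (simp add: algebra_simps)
    show "a (n + 1) = M11 * a n + M12 * b n" "b (n + 1) = M21 * a n + M22 * b n"
      using R[of T n] unfolding a_def b_def e by (simp_all add: M11_def M12_def M21_def M22_def algebra_simps)
  qed
  have nz0: "a 0 \<noteq> 0 \<or> b 0 \<noteq> 0"
  proof (rule ccontr)
    assume "\<not> (a 0 \<noteq> 0 \<or> b 0 \<noteq> 0)"
    then have "p z = 0" for z using R[of z 0] by simp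
    then show False using nz by blast
  qed
  obtain Bd where Bd: "\<And>z. cmod (p z) \<le> Bd" using bd unfolding bounded_iff by blast
  obtain z1 where z1: "ub z1 \<noteq> 0"
  proof (rule ccontr)
    assume "\<not> thesis"
    then have "ub = (\<lambda>_. 0)" using that by auto
    then have "((\<lambda>_. 0) has_real_derivative vb 0) (at 0)" using dub[of 0] by simp
    from DERIV_unique[OF this DERIV_const] show False using ub by simp
  qed
  define K0 where "K0 = max Bd ((Bd + \<bar>ua z1\<bar> * Bd) / \<bar>ub z1\<bar>)"
  have aK: "cmod (a n) \<le> K0" for n unfolding a_def K0_def using Bd by (meson max.coboundedI1)
  have bK: "cmod (b n) \<le> K0" for n
  proof -
    have "b n * of_real (ub z1) = p (z1 + of_int n * T) - a n * of_real (ua z1)"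
      using R[of z1 n] by simp
    then have "cmod (b n) * \<bar>ub z1\<bar> = cmod (p (z1 + of_int n * T) - a n * of_real (ua z1))"
      by (metis norm_mult norm_of_real)
    also have "\<dots> \<le> Bd + \<bar>ua z1\<bar> * Bd"
    proof -
      have "cmod (a n * of_real (ua z1)) \<le> \<bar>ua z1\<bar> * Bd"
        using Bd[of "of_int n * T"] unfolding a_def norm_mult by (simp add: mult.commute) (metis abs_ge_zero mult.commute mult_left_mono)
      then show ?thesis using Bd[of "z1 + of_int n * T"] norm_triangle_ineq4 by (smt (verit))
    qed
    finally have "cmod (b n) \<le> (Bd + \<bar>ua z1\<bar> * Bd) / \<bar>ub z1\<bar>"
      using z1 by (simp add: field_simps)
    then show ?thesis unfolding K0_def by linarith
  qed
  define d where "d = ua T * vb T - va T * ub T"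
  have dexp: "d = exp (tau * T)"
  proof -
    have "of_real (ua T) * of_real (vb T) - of_real (va T) * of_real (ub T) = (of_real (exp (tau * T)) :: complex)"
      using wronsk[OF la lb, of T] ua ub by simp
    then have "(of_real d :: complex) = of_real (exp (tau * T))" unfolding d_def by simp
    then show ?thesis by (simp only: of_real_eq_iff)
  qed
  have d1: "d \<noteq> 1" using tau0 T0 unfolding dexp by simp
  have dpos: "d > 0" unfolding dexp by simp
  have Md: "M11 * M22 - M12 * M21 = of_real d" by (simp add: M11_def M12_def M21_def M22_def d_def)
  define D where "D n = a n * b (n + 1) - b n * a (n + 1)" for n
  have Drec: "D (n + 1) = of_real d * D n" for n
  proof -
    have "D (n + 1) = a (n + 1) * (M21 * a (n + 1) + M22 * b (n + 1)) - b (n + 1) * (M11 * a (n + 1) + M12 * b (n + 1))"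
      unfolding D_def using arec[of "n + 1"] brec[of "n + 1"] by (simp add: add.assoc)
    also have "\<dots> = of_real d * D n"
      unfolding arec[of n] brec[of n] D_def Md[symmetric] by (rule Drec_alg)
    finally show ?thesis .
  qed
  have DK: "cmod (D n) \<le> 2 * K0\<^sup>2" for n
  proof -
    have "cmod (D n) \<le> cmod (a n) * cmod (b (n + 1)) + cmod (b n) * cmod (a (n + 1))"
      unfolding D_def by (metis norm_mult norm_triangle_ineq4)
    also have "\<dots> \<le> K0 * K0 + K0 * K0"
      using aK bK order_trans[OF norm_ge_zero aK] by (intro add_mono mult_mono) auto
    finally show ?thesis by (simp add: power2_eq_square)
  qed
  have Dpos: "D (of_nat k) = of_real d ^ k * D 0" for k
  proof (induction k)
    case (Suc k)
    have "D (of_nat (Suc k)) = D (of_nat k + 1)" by (simp add: add.commute)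
    also have "\<dots> = of_real d * D (of_nat k)" by (rule Drec)
    finally show ?case using Suc by simp
  qed simp
  have Dneg: "D (- of_nat k) * of_real d ^ k = D 0" for k
  proof (induction k)
    case (Suc k)
    have "D (- of_nat k) = of_real d * D (- of_nat (Suc k))"
      using Drec[of "- of_nat (Suc k)"] by simp
    then show ?case using Suc by (simp add: algebra_simps)
  qed simp
  have D0: "D 0 = 0"
  proof (rule ccontr)
    assume "D 0 \<noteq> 0"
    then have c: "cmod (D 0) > 0" by simp
    show False
    proof (cases "d > 1")
      case True
      show False
      proof (rule pow_unbounded[OF True c])
        fix k :: nat show "cmod (D 0) * d ^ k \<le> 2 * K0\<^sup>2"
          using DK[of "of_nat k"] dpos unfolding Dpos by (simp add: norm_mult norm_power mult.commute)
      qed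
    next
      case False
      then have dl: "d < 1" using d1 by simp
      show False
      proof (rule pow_unbounded[OF _ c])
        show "1 < 1 / d" using dl dpos by simp
        fix k :: nat
        have "cmod (D 0) = cmod (D (- of_nat k)) * d ^ k"
          using Dneg[of k] dpos by (metis norm_mult norm_of_real norm_power abs_of_pos)
        also have "\<dots> \<le> 2 * K0\<^sup>2 * d ^ k" using DK dpos by (intro mult_right_mono) auto
        finally show "cmod (D 0) * (1 / d) ^ k \<le> 2 * K0\<^sup>2" using dpos by (simp add: field_simps power_divide)
      qed
    qed
  qed
  obtain rho where r1: "a 1 = rho * a 0" and r2: "b 1 = rho * b 0"
  proof (cases "a 0 = 0")
    case False
    have "b 1 = (a 1 / a 0) * b 0"
      using D0 False unfolding D_def by (simp add: field_simps)
    then show ?thesis using that[of "a 1 / a 0"] False by simp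
  next
    case True
    then have b0: "b 0 \<noteq> 0" using nz0 by simp
    have "a 1 = 0" using D0 True b0 unfolding D_def by simp
    then show ?thesis using that[of "b 1 / b 0"] True b0 by simp
  qed
  have fwd: "a (of_nat k) = rho ^ k * a 0 \<and> b (of_nat k) = rho ^ k * b 0" for k
  proof (induction k)
    case (Suc k)
    have e: "of_nat (Suc k) = (of_nat k :: int) + 1" by simp
    have A0: "M11 * a 0 + M12 * b 0 = rho * a 0" and B0: "M21 * a 0 + M22 * b 0 = rho * b 0"
      using r1 r2 arec[of 0] brec[of 0] by simp_all
    have "a (of_nat k + 1) = rho ^ k * (M11 * a 0 + M12 * b 0)"
      unfolding arec using Suc by (simp add: algebra_simps)
    moreover have "b (of_nat k + 1) = rho ^ k * (M21 * a 0 + M22 * b 0)"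
      unfolding brec using Suc by (simp add: algebra_simps)
    ultimately show ?case unfolding e A0 B0 by simp
  qed simp
  have bwd: "rho ^ k * a (- of_nat k) = a 0 \<and> rho ^ k * b (- of_nat k) = b 0" for k
  proof (induction k)
    case (Suc k)
    define x where "x = a (- of_nat (Suc k))"
    define y where "y = b (- of_nat (Suc k))"
    have ax: "a (- of_nat k) = M11 * x + M12 * y" and bx: "b (- of_nat k) = M21 * x + M22 * y"
      using arec[of "- of_nat (Suc k)"] brec[of "- of_nat (Suc k)"] unfolding x_def y_def by simp_all
    have "M11 * (rho ^ Suc k * x) + M12 * (rho ^ Suc k * y) = M11 * a 0 + M12 * b 0"
    proof -
      have "M11 * (rho ^ Suc k * x) + M12 * (rho ^ Suc k * y) = rho * (rho ^ k * a (- of_nat k))"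
        unfolding ax by (simp only: power_Suc algebra_simps)
      also have "\<dots> = a 1" using Suc r1 by simp
      finally show ?thesis using arec[of 0] by simp
    qed
    moreover have "M21 * (rho ^ Suc k * x) + M22 * (rho ^ Suc k * y) = M21 * a 0 + M22 * b 0"
    proof -
      have "M21 * (rho ^ Suc k * x) + M22 * (rho ^ Suc k * y) = rho * (rho ^ k * b (- of_nat k))"
        unfolding bx by (simp only: power_Suc algebra_simps)
      also have "\<dots> = b 1" using Suc r2 by simp
      finally show ?thesis using brec[of 0] by simp
    qed
    moreover have dne: "M11 * M22 - M12 * M21 \<noteq> 0" using Md dpos by simp
    ultimately have "rho ^ Suc k * x = a 0 \<and> rho ^ Suc k * y = b 0"
      using inj2 by blast
    then show ?case unfolding x_def y_def .
  qed simp
  have unit: "cmod rho = 1"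
  proof (cases "a 0 = 0")
    case False
    show ?thesis
    proof (rule unit_mod[OF False])
      fix k :: nat
      show "cmod (rho ^ k * a 0) \<le> K0" using fwd[of k] aK by metis
      have "cmod (a 0) = cmod (rho) ^ k * cmod (a (- of_nat k))"
        using bwd[of k] by (metis norm_mult norm_power)
      then show "cmod (a 0) \<le> cmod rho ^ k * K0"
        using aK[of "- of_nat k"] by (simp add: mult_left_mono)
    qed
  next
    case True
    then have b0: "b 0 \<noteq> 0" using nz0 by simp
    show ?thesis
    proof (rule unit_mod[OF b0])
      fix k :: nat
      show "cmod (rho ^ k * b 0) \<le> K0" using fwd[of k] bK by metis
      have "cmod (b 0) = cmod (rho) ^ k * cmod (b (- of_nat k))"
        using bwd[of k] by (metis norm_mult norm_power)
      then show "cmod (b 0) \<le> cmod rho ^ k * K0"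
        using bK[of "- of_nat k"] by (simp add: mult_left_mono)
    qed
  qed
  have cp: "rho\<^sup>2 - (M11 + M22) * rho + (M11 * M22 - M12 * M21) = 0"
    by (rule charpoly) (use r1 r2 arec[of 0] brec[of 0] nz0 in simp_all)
  have sq: "rho\<^sup>2 = 1"
    by (rule final_alg[of rho "ua T + vb T" d]) (use cp Md unit d1 in \<open>simp_all add: M11_def M22_def\<close>)
  define v :: "complex^2" where "v = (\<chi> i. if i = 1 then a 0 else b 0)"
  have v0: "v \<noteq> 0" using nz0 by (auto simp: v_def vec_eq_iff forall_2)
  have "monodromy c f T (of_real lam) *v v = rho *s v"
    unfolding mono using r1 r2 arec[of 0] brec[of 0]
    by (simp add: vec_eq_iff forall_2 matrix_vector_mult_def sum_2 F_def v_def M11_def M12_def M21_def M22_def)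
  then have "floquet_multiplier c f T (of_real lam) rho"
    unfolding floquet_multiplier_def using v0 by blast
  then show ?thesis using sq by blast
qed


end
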